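(* Let $n\ge1$. For all $0\le a,b\le n$ and $0\le i,j\le n-1$ the following identity of operators on $F^{\otimes(n-1)}$ holds: \[ \sum_{a',b'=0}^{n-1}R(y/x)^{a',b'}_{i,j}\,T(y)_{b'b}\,T(x)_{a'a}=\sum_{i',j'=0}^{n}T(x)_{ii'}\,T(y)_{jj'}\,R(y/x)^{a,b}_{i',j'}. \]
   Context: $R$ matrix (indices in $\{0,\dots,n\}$): $R(z)^{\alpha,\alpha}_{\alpha,\alpha}=1$; for $\alpha\ne\beta$, $R(z)^{\alpha,\beta}_{\alpha,\beta}=\frac{(1-z)t^{\theta(\alpha<\beta)}}{1-tz}$, $R(z)^{\beta,\alpha}_{\alpha,\beta}=\frac{(1-t)z^{\theta(\alpha>\beta)}}{1-tz}$; all other entries $0$; $\theta(\text{true})=1,\theta(\text{false})=0$. Oscillators: $F=\bigoplus_{d\ge0}\mathbb{Q}(t)|d\rangle$, $\mathbf{a}^+|d\rangle=|d+1\rangle$, $\mathbf{a}^-|d\rangle=(1-t^d)|d-1\rangle$ ($|-1\rangle=0$), $\mathbf{k}|d\rangle=t^d|d\rangle$; on $F^{\otimes(n-1)}$, $\mathbf{a}^\pm_r,\mathbf{k}_r$ act on the $r$-th factor ($1\le r\le n-1$), and $\mathbf{a}^+_0:=1$. $T(z)_{i\alpha}$ for $0\le i\le n-1$, $0\le\alpha\le n$: $T(z)_{i0}=\mathbf{a}^+_i$; for $\alpha\ge1$, $T(z)_{i\alpha}=z\,\mathbf{k}_\alpha\cdots\mathbf{k}_{n-1}$ if $\alpha=i+1$,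 $T(z)_{i\alpha}=z\,\mathbf{a}^+_i\mathbf{a}^-_{\alpha-1}\mathbf{k}_\alpha\cdots\mathbf{k}_{n-1}$ if $\alpha\ge i+2$, and $T(z)_{i\alpha}=0$ if $\alpha\le i$ (empty products equal $1$). *)

theory Defs
  imports Main
begin

(* Vectors in F^{\<otimes>(n-1)}: coefficient functions on basis states |d_1,...,d_{n-1}>,
   a basis state being a function e :: nat \<Rightarrow> nat (only e 1, ..., e (n-1) are relevant). *)
type_synonym 'a fvec = "(nat \<Rightarrow> nat) \<Rightarrow> 'a"

(* a^+_r |d> = |d+1> on factor r;  a^+_0 := 1 *)
definition osc_ap :: "nat \<Rightarrow> 'a::field fvec \<Rightarrow> 'a fvec" where
  "osc_ap r v = (\<lambda>e. if r = 0 then v e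
                      else if e r = 0 then 0 else v (e(r := e r - 1)))"

(* a^-_r |d> = (1 - t^d) |d-1> on factor r *)
definition osc_am :: "'a::field \<Rightarrow> nat \<Rightarrow> 'a fvec \<Rightarrow> 'a fvec" where
  "osc_am t r v = (\<lambda>e. (1 - t ^ Suc (e r)) * v (e(r := Suc (e r))))"

definition osc_k :: "'a::field \<Rightarrow> nat \<Rightarrow> 'a fvec \<Rightarrow> 'a fvec" where
  "osc_k t r v = (\<lambda>e. t ^ e r * v e)"

definition osc_kprod :: "'a::field \<Rightarrow> nat \<Rightarrow> nat \<Rightarrow> 'a fvec \<Rightarrow> 'a fvec" where
  "osc_kprod t \<alpha> n v = foldr (osc_k t) [\<alpha>..<n] v"

definition Tmat :: "'a::field \<Rightarrow> nat \<Rightarrow> 'a \<Rightarrow> nat \<Rightarrow> nat \<Rightarrow> 'a fvec \<Rightarrow> 'a fvec" where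
  "Tmat t n z i \<alpha> v =
     (if \<alpha> = 0 then osc_ap i v
      else if \<alpha> = i + 1 then (\<lambda>e. z * osc_kprod t \<alpha> n v e)
      else if \<alpha> \<ge> i + 2 then (\<lambda>e. z * osc_ap i (osc_am t (\<alpha> - 1) (osc_kprod t \<alpha> n v)) e)
      else (\<lambda>e. 0))"

definition Rmat :: "'a::field \<Rightarrow> 'a \<Rightarrow> nat \<Rightarrow> nat \<Rightarrow> nat \<Rightarrow> nat \<Rightarrow> 'a" where
  "Rmat t z \<gamma> \<delta> \<alpha> \<beta> =
     (if \<alpha> = \<beta> then (if \<gamma> = \<alpha> \<and> \<delta> = \<beta> then 1 else 0)
      else if \<gamma> = \<alpha> \<and> \<delta> = \<beta> then (1 - z) * t ^ (if \<alpha> < \<beta> then 1 else 0) / (1 - t * z)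
      else if \<gamma> = \<beta> \<and> \<delta> = \<alpha> then (1 - t) * z ^ (if \<alpha> > \<beta> then 1 else 0) / (1 - t * z)
      else 0)"

end

theory Submission
  imports Defs
begin


lemma dsum2:
  fixes G :: "nat \<Rightarrow> nat \<Rightarrow> 'a::comm_monoid_add"
  assumes "p \<le> m" "q \<le> m"
  shows "(\<Sum>x=0..m. \<Sum>y=0..m. if x = p then if y = q then G x y else 0 else 0) = G p q"
proof -
  have "(\<Sum>x=0..m. \<Sum>y=0..m. if x = p then if y = q then G x y else 0 else 0)
     = (\<Sum>x=0..m. if x = p then G x q else 0)"
    by (rule sum.cong[OF refl]) (simp add: sum.delta assms)
  also have "\<dots> = G p q" using assms by (simp add: sum.delta)
  finally show ?thesis .
qed

lemma sumL:
  fixes F :: "nat \<Rightarrow> nat \<Rightarrow> 'a::field"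
  assumes "i \<le> m" "j \<le> m"
  shows "(\<Sum>a'=0..m. \<Sum>b'=0..m. Rmat t z a' b' i j * F a' b') =
    (if i = j then F i i else Rmat t z i j i j * F i j + Rmat t z j i i j * F j i)"
proof (cases "i = j")
  case True
  have "(\<Sum>a'=0..m. \<Sum>b'=0..m. Rmat t z a' b' i j * F a' b') =
        (\<Sum>a'=0..m. \<Sum>b'=0..m. (if a' = i then (if b' = i then F a' b' else 0) else 0))"
    by (rule sum.cong[OF refl], rule sum.cong[OF refl]) (auto simp: Rmat_def True)
  also have "\<dots> = (\<Sum>a'=0..m. if a' = i then F a' i else 0)"
    by (rule sum.cong[OF refl]) (simp add: sum.delta assms)
  also have "\<dots> = F i i" using assms by (simp add: sum.delta)
  finally show ?thesis using True by simp
next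
  case False
  have "(\<Sum>a'=0..m. \<Sum>b'=0..m. Rmat t z a' b' i j * F a' b') =
        (\<Sum>a'=0..m. \<Sum>b'=0..m. (if a' = i then (if b' = j then Rmat t z i j i j * F a' b' else 0) else 0)
          + (if a' = j then (if b' = i then Rmat t z j i i j * F a' b' else 0) else 0))"
    by (rule sum.cong[OF refl], rule sum.cong[OF refl]) (auto simp: Rmat_def False)
  also have "\<dots> = Rmat t z i j i j * F i j + Rmat t z j i i j * F j i"
    using assms by (simp add: sum.distrib dsum2)
  finally show ?thesis using False by simp
qed

lemma sumR:
  fixes F :: "nat \<Rightarrow> nat \<Rightarrow> 'a::field"
  assumes "a \<le> m" "b \<le> m"
  shows "(\<Sum>i'=0..m. \<Sum>j'=0..m. F i' j' * Rmat t z a b i' j') =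
    (if a = b then F a a else F a b * Rmat t z a b a b + F b a * Rmat t z a b b a)"
proof (cases "a = b")
  case True
  have "(\<Sum>i'=0..m. \<Sum>j'=0..m. F i' j' * Rmat t z a b i' j') =
        (\<Sum>i'=0..m. \<Sum>j'=0..m. (if i' = a then (if j' = a then F i' j' else 0) else 0))"
    by (rule sum.cong[OF refl], rule sum.cong[OF refl]) (auto simp: Rmat_def True)
  also have "\<dots> = (\<Sum>i'=0..m. if i' = a then F i' a else 0)"
    by (rule sum.cong[OF refl]) (simp add: sum.delta assms)
  also have "\<dots> = F a a" using assms by (simp add: sum.delta)
  finally show ?thesis using True by simp
next
  case False
  have "(\<Sum>i'=0..m. \<Sum>j'=0..m. F i' j' * Rmat t z a b i' j') =
        (\<Sum>i'=0..m. \<Sum>j'=0..m. (if i' = a then (if j' = b then F i' j' * Rmat t z a b a b else 0) else 0)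
          + (if i' = b then (if j' = a then F i' j' * Rmat t z a b b a else 0) else 0))"
    by (rule sum.cong[OF refl], rule sum.cong[OF refl]) (auto simp: Rmat_def False)
  also have "\<dots> = F a b * Rmat t z a b a b + F b a * Rmat t z a b b a"
    using assms by (simp add: sum.distrib dsum2)
  finally show ?thesis using False by simp
qed

definition ks :: "nat \<Rightarrow> nat \<Rightarrow> (nat \<Rightarrow> nat) \<Rightarrow> nat" where
  "ks \<alpha> n e = (\<Sum>r\<in>{\<alpha>..<n}. e r)"

lemma kprod_pt: "osc_kprod t \<alpha> n v e = t ^ ks \<alpha> n e * v e"
proof (induction n arbitrary: v e)
  case 0 then show ?case by (simp add: osc_kprod_def ks_def)
next
  case (Suc n)
  show ?case
  proof (cases "\<alpha> \<le> n")
    case True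
    have "osc_kprod t \<alpha> (Suc n) v = osc_kprod t \<alpha> n (osc_k t n v)"
      using True by (simp add: osc_kprod_def)
    then show ?thesis using Suc True by (simp add: osc_k_def ks_def power_add mult_ac)
  next
    case False
    then show ?thesis by (simp add: osc_kprod_def ks_def)
  qed
qed



lemma ks_inc:
  assumes h: "g r = k"
  shows "ks \<alpha> n (g(r := Suc k)) = (if \<alpha> \<le> r \<and> r < n then Suc (ks \<alpha> n g) else ks \<alpha> n g)"
proof (cases "\<alpha> \<le> r \<and> r < n")
  case True
  have f: "finite {\<alpha>..<n}" by simp
  have "(\<Sum>x\<in>{\<alpha>..<n}. (g(r := Suc k)) x) = Suc k + (\<Sum>x\<in>{\<alpha>..<n} - {r}. (g(r := Suc k)) x)"
    using True by (subst sum.remove[OF f, of r]) auto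
  also have "(\<Sum>x\<in>{\<alpha>..<n} - {r}. (g(r := Suc k)) x) = (\<Sum>x\<in>{\<alpha>..<n} - {r}. g x)"
    by (rule sum.cong) auto
  also have "(\<Sum>x\<in>{\<alpha>..<n}. g x) = k + (\<Sum>x\<in>{\<alpha>..<n} - {r}. g x)"
    using True h by (subst sum.remove[OF f, of r]) auto
  ultimately show ?thesis using True by (simp add: ks_def)
next
  case False
  then show ?thesis unfolding ks_def by (auto intro!: sum.cong)
qed

lemma ks_inc2: "g r = k \<Longrightarrow> ks \<alpha> n (g(r := Suc (Suc k))) = (if \<alpha> \<le> r \<and> r < n then Suc (Suc (ks \<alpha> n g)) else ks \<alpha> n g)"
proof -
  assume h: "g r = k"
  have "g(r := Suc (Suc k)) = (g(r := Suc k))(r := Suc (Suc k))" by simp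
  then show ?thesis using ks_inc[of "g(r := Suc k)" r "Suc k" \<alpha> n] ks_inc[of g r k \<alpha> n] h by simp
qed

definition Mop :: "'a::field \<Rightarrow> nat \<Rightarrow> nat \<Rightarrow> nat \<Rightarrow> 'a fvec \<Rightarrow> 'a fvec" where
  "Mop t n i \<alpha> v =
     (if \<alpha> = 0 then osc_ap i v
      else if \<alpha> = i + 1 then osc_kprod t \<alpha> n v
      else if \<alpha> \<ge> i + 2 then osc_ap i (osc_am t (\<alpha> - 1) (osc_kprod t \<alpha> n v))
      else (\<lambda>e. 0))"

lemma Mop_pt: "Mop t n i \<alpha> v e =
   (if \<alpha> = 0 then (if i = 0 then v e else if e i = 0 then 0 else v (e(i := e i - 1)))
    else if \<alpha> = i + 1 then t ^ ks \<alpha> n e * v e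
    else if \<alpha> \<ge> i + 2 then
      (if i = 0 then (1 - t ^ Suc (e (\<alpha> - 1))) * (t ^ ks \<alpha> n e * v (e(\<alpha> - 1 := Suc (e (\<alpha> - 1)))))
       else if e i = 0 then 0 else
       (1 - t ^ Suc (e (\<alpha> - 1))) * (t ^ ks \<alpha> n (e(i := e i - 1)) * v (e(i := e i - 1, \<alpha> - 1 := Suc (e (\<alpha> - 1))))))
    else 0)"
  by (auto simp: Mop_def osc_ap_def osc_am_def kprod_pt ks_inc)

lemmas S = Mop_pt ks_inc ks_inc2 fun_upd_twist

lemma R1a:
  assumes "a1 < b1" "b1 < n" "i < n"
  defines "a \<equiv> Suc a1" and "b \<equiv> Suc b1"
  shows "Mop t n i b (Mop t n i a v) e = t * Mop t n i a (Mop t n i b v) e"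
proof -
  consider "a1 < i" | "a1 = i" | "a1 > i" by linarith
  then show ?thesis
  proof cases
    case 1
    then show ?thesis using assms unfolding a_def b_def by (simp add: S)
  next
    case 2
    then show ?thesis
    proof (cases "i = 0")
      case True
      then show ?thesis using assms 2 unfolding a_def b_def by (simp add: S)
    next
      case False
      show ?thesis
      proof (cases "e i")
        case 0
        then show ?thesis using assms 2 False unfolding a_def b_def by (simp add: S)
      next
        case (Suc m)
        define f where "f = e(i := m)"
        have e: "e = f(i := Suc (f i))" using Suc by (auto simp: f_def)
        show ?thesis unfolding e using assms 2 False unfolding a_def b_def by (simp add: S)
      qed
    qed
  next
    case 3
    then show ?thesis
    proof (cases "i = 0")
      case True
      then show ?thesis using assms 3 unfolding a_def b_def by (simp add: S)
    next
      case False
      show ?thesis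
      proof (cases "e i")
        case 0
        then show ?thesis using assms 3 False unfolding a_def b_def by (simp add: S)
      next
        case (Suc m)
        show ?thesis
        proof (cases m)
          case 0
          define f where "f = e(i := m)"
          have e: "e = f(i := Suc (f i))" using Suc by (auto simp: f_def)
          have fi: "f i = 0" using 0 by (simp add: f_def)
          show ?thesis unfolding e using fi assms 3 False unfolding a_def b_def by (simp add: S)
        next
          case (Suc m')
          define f where "f = e(i := m')"
          have e: "e = f(i := Suc (Suc (f i)))" using Suc \<open>e i = Suc m\<close> by (auto simp: f_def)
          show ?thesis unfolding e using assms 3 False unfolding a_def b_def by (simp add: S)
        qed
      qed
    qed
  qed
qed


lemma split1:
  assumes "\<And>f. f i = 0 \<Longrightarrow> P f" "\<And>f. f i = 0 \<Longrightarrow> P (f(i := Suc (f i)))"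
    "\<And>f. P (f(i := Suc (Suc (f i))))"
  shows "P e"
proof (cases "e i")
  case 0 then show ?thesis using assms(1) by simp
next
  case (Suc m)
  show ?thesis
  proof (cases m)
    case 0
    have "e = (e(i := 0))(i := Suc ((e(i := 0)) i))" using Suc 0 by auto
    then show ?thesis using assms(2)[of "e(i := 0)"] by simp
  next
    case (Suc k)
    have "e = (e(i := k))(i := Suc (Suc ((e(i := k)) i)))" using Suc \<open>e i = Suc m\<close> by auto
    then show ?thesis using assms(3)[of "e(i := k)"] by simp
  qed
qed

lemma split2:
  assumes "i \<noteq> j"
    "\<And>f. f i = 0 \<Longrightarrow> f j = 0 \<Longrightarrow> P f"
    "\<And>f. f i = 0 \<Longrightarrow> P (f(j := Suc (f j)))"
    "\<And>f. f j = 0 \<Longrightarrow> P (f(i := Suc (f i)))"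
    "\<And>f. P (f(i := Suc (f i), j := Suc (f j)))"
  shows "P e"
proof (cases "e i")
  case 0
  show ?thesis
  proof (cases "e j")
    case 0 then show ?thesis using assms(2) \<open>e i = 0\<close> by simp
  next
    case (Suc k)
    have "e = (e(j := k))(j := Suc ((e(j := k)) j))" using Suc by auto
    then show ?thesis using assms(3)[of "e(j := k)"] \<open>e i = 0\<close> assms(1) by simp
  qed
next
  case (Suc m)
  show ?thesis
  proof (cases "e j")
    case 0
    have "e = (e(i := m))(i := Suc ((e(i := m)) i))" using Suc by auto
    then show ?thesis using assms(4)[of "e(i := m)"] 0 assms(1) by simp
  next
    case (Suc k)
    have "e = (e(i := m, j := k))(i := Suc ((e(i := m, j := k)) i), j := Suc ((e(i := m, j := k)) j))"
      using Suc \<open>e i = Suc m\<close> assms(1) by (auto simp: fun_upd_twist)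
    then show ?thesis using assms(5)[of "e(i := m, j := k)"] by simp
  qed
qed


lemma ks_upd_below: "r < \<alpha> \<Longrightarrow> ks \<alpha> n (g(r := m)) = ks \<alpha> n g"
  unfolding ks_def by (auto intro!: sum.cong)

lemma Mop_Z: "a1 < i \<Longrightarrow> Mop t n i (Suc a1) v e = 0"
  by (simp add: Mop_pt)
lemma Mop_A0: "Mop t n 0 0 v e = v e"
  by (simp add: Mop_pt)
lemma Mop_A: "0 < i \<Longrightarrow> Mop t n i 0 v e = (if e i = 0 then 0 else v (e(i := e i - 1)))"
  by (simp add: Mop_pt)
lemma Mop_D: "Mop t n i (Suc i) v e = t ^ ks (Suc i) n e * v e"
  by (simp add: Mop_pt)
lemma Mop_U0: "0 < a1 \<Longrightarrow> Mop t n 0 (Suc a1) v e = (1 - t ^ Suc (e a1)) * (t ^ ks (Suc a1) n e * v (e(a1 := Suc (e a1))))"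
  by (simp add: Mop_pt)
lemma Mop_U: "0 < i \<Longrightarrow> i < a1 \<Longrightarrow> Mop t n i (Suc a1) v e =
   (if e i = 0 then 0 else (1 - t ^ Suc (e a1)) * (t ^ ks (Suc a1) n e * v (e(i := e i - 1, a1 := Suc (e a1)))))"
  by (simp add: Mop_pt ks_upd_below)

lemmas S2 = Mop_Z Mop_A0 Mop_A Mop_D Mop_U0 Mop_U ks_inc ks_inc2 fun_upd_twist fun_upd_idem ks_upd_below




lemma R1a':
  assumes "a1 < b1" "b1 < n" "i < n"
  shows "Mop t n i (Suc b1) (Mop t n i (Suc a1) v) e = t * Mop t n i (Suc a1) (Mop t n i (Suc b1) v) e"
  using assms
  apply (cases rule: linorder_cases[of a1 i]; cases rule: linorder_cases[of b1 i]; cases "i = 0";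
      ((linarith | (rule split1[where i=i and P="\<lambda>e. Mop t n i (Suc b1) (Mop t n i (Suc a1) v) e = t * Mop t n i (Suc a1) (Mop t n i (Suc b1) v) e"]; simp add: S2))?))
  apply (rule split1[where i=i and P="\<lambda>e. Mop t n i (Suc b1) (Mop t n i (Suc a1) v) e = t * Mop t n i (Suc a1) (Mop t n i (Suc b1) v) e"])
  apply (simp_all add: S2)
  done



lemma R1b:
  assumes "b1 < n" "i < n"
  shows "Mop t n i 0 (Mop t n i (Suc b1) v) e = Mop t n i (Suc b1) (Mop t n i 0 v) e"
  using assms
  apply (cases rule: linorder_cases[of b1 i]; cases "i = 0";
      ((linarith | (rule split1[where i=i and P="\<lambda>e. Mop t n i 0 (Mop t n i (Suc b1) v) e = Mop t n i (Suc b1) (Mop t n i 0 v) e"]; simp add: S2; (simp add: algebra_simps)?))?))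
  apply ((rule split1[where i=i and P="\<lambda>e. Mop t n i 0 (Mop t n i (Suc b1) v) e = Mop t n i (Suc b1) (Mop t n i 0 v) e"])?; simp add: S2; (simp add: algebra_simps)?)+
  done



lemma R2:
  assumes "i \<noteq> j" "i < n" "j < n" "a1 < n"
  shows "Mop t n j (Suc a1) (Mop t n i (Suc a1) v) e = Mop t n i (Suc a1) (Mop t n j (Suc a1) v) e"
  using assms
  apply (cases rule: linorder_cases[of a1 i]; cases rule: linorder_cases[of a1 j]; cases "i = 0"; cases "j = 0";
      ((linarith | (rule split2[where i=i and j=j and P="\<lambda>e. Mop t n j (Suc a1) (Mop t n i (Suc a1) v) e = Mop t n i (Suc a1) (Mop t n j (Suc a1) v) e"]; simp add: S2; (simp add: algebra_simps)?))?))
  apply ((rule split2[where i=i and j=j and P="\<lambda>e. Mop t n j (Suc a1) (Mop t n i (Suc a1) v) e = Mop t n i (Suc a1) (Mop t n j (Suc a1) v) e"])?; simp add: S2; (simp add: algebra_simps)?)+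
  done



lemma R2z:
  assumes "i \<noteq> j" "i < n" "j < n"
  shows "Mop t n j 0 (Mop t n i 0 v) e = Mop t n i 0 (Mop t n j 0 v) e"
  using assms
  apply (cases "i = 0"; cases "j = 0";
      ((linarith | (rule split2[where i=i and j=j and P="\<lambda>e. Mop t n j 0 (Mop t n i 0 v) e = Mop t n i 0 (Mop t n j 0 v) e"]; simp add: S2; (simp add: algebra_simps)?))?))
  apply ((rule split2[where i=i and j=j and P="\<lambda>e. Mop t n j 0 (Mop t n i 0 v) e = Mop t n i 0 (Mop t n j 0 v) e"])?; simp add: S2; (simp add: algebra_simps)?)+
  done



lemma R3:
  assumes "i < j" "j < n" "a1 < b1" "b1 < n"
  shows "t * Mop t n j (Suc b1) (Mop t n i (Suc a1) v) e + (1 - t) * Mop t n i (Suc b1) (Mop t n j (Suc a1) v) e = t * Mop t n i (Suc a1) (Mop t n j (Suc b1) v) e"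
  using assms
  apply (cases rule: linorder_cases[of a1 i]; cases rule: linorder_cases[of a1 j]; cases rule: linorder_cases[of b1 i]; cases rule: linorder_cases[of b1 j]; cases "i = 0"; cases "j = 0";
      ((linarith | (rule split2[where i=i and j=j and P="\<lambda>e. t * Mop t n j (Suc b1) (Mop t n i (Suc a1) v) e + (1 - t) * Mop t n i (Suc b1) (Mop t n j (Suc a1) v) e = t * Mop t n i (Suc a1) (Mop t n j (Suc b1) v) e"]; simp add: S2; (simp add: algebra_simps)?))?))
  apply ((rule split2[where i=i and j=j and P="\<lambda>e. t * Mop t n j (Suc b1) (Mop t n i (Suc a1) v) e + (1 - t) * Mop t n i (Suc b1) (Mop t n j (Suc a1) v) e = t * Mop t n i (Suc a1) (Mop t n j (Suc b1) v) e"])?; simp add: S2; (simp add: algebra_simps)?)+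
  done



lemma R5:
  assumes "j < i" "i < n" "a1 < b1" "b1 < n"
  shows "Mop t n j (Suc b1) (Mop t n i (Suc a1) v) e = t * Mop t n i (Suc a1) (Mop t n j (Suc b1) v) e"
  using assms
  apply (cases rule: linorder_cases[of a1 i]; cases rule: linorder_cases[of a1 j]; cases rule: linorder_cases[of b1 i]; cases rule: linorder_cases[of b1 j]; cases "i = 0"; cases "j = 0";
      ((linarith | (rule split2[where i=i and j=j and P="\<lambda>e. Mop t n j (Suc b1) (Mop t n i (Suc a1) v) e = t * Mop t n i (Suc a1) (Mop t n j (Suc b1) v) e"]; simp add: S2; (simp add: algebra_simps)?))?))
  apply ((rule split2[where i=i and j=j and P="\<lambda>e. Mop t n j (Suc b1) (Mop t n i (Suc a1) v) e = t * Mop t n i (Suc a1) (Mop t n j (Suc b1) v) e"])?; simp add: S2; (simp add: algebra_simps)?)+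
  done



lemma R6:
  assumes "j < i" "i < n" "b1 < a1" "a1 < n"
  shows "Mop t n j (Suc b1) (Mop t n i (Suc a1) v) e - Mop t n i (Suc a1) (Mop t n j (Suc b1) v) e = (1 - t) * Mop t n i (Suc b1) (Mop t n j (Suc a1) v) e"
  using assms
  apply (cases rule: linorder_cases[of a1 i]; cases rule: linorder_cases[of a1 j]; cases rule: linorder_cases[of b1 i]; cases rule: linorder_cases[of b1 j]; cases "i = 0"; cases "j = 0";
      ((linarith | (rule split2[where i=i and j=j and P="\<lambda>e. Mop t n j (Suc b1) (Mop t n i (Suc a1) v) e - Mop t n i (Suc a1) (Mop t n j (Suc b1) v) e = (1 - t) * Mop t n i (Suc b1) (Mop t n j (Suc a1) v) e"]; simp add: S2; (simp add: algebra_simps)?))?))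
  apply ((rule split2[where i=i and j=j and P="\<lambda>e. Mop t n j (Suc b1) (Mop t n i (Suc a1) v) e - Mop t n i (Suc a1) (Mop t n j (Suc b1) v) e = (1 - t) * Mop t n i (Suc b1) (Mop t n j (Suc a1) v) e"])?; simp add: S2; (simp add: algebra_simps)?)+
  done



lemma R7:
  assumes "i < j" "j < n" "b1 < n"
  shows "Mop t n i 0 (Mop t n j (Suc b1) v) e = Mop t n j (Suc b1) (Mop t n i 0 v) e"
  using assms
  apply (cases rule: linorder_cases[of b1 i]; cases rule: linorder_cases[of b1 j]; cases "i = 0"; cases "j = 0";
      ((linarith | (rule split2[where i=i and j=j and P="\<lambda>e. Mop t n i 0 (Mop t n j (Suc b1) v) e = Mop t n j (Suc b1) (Mop t n i 0 v) e"]; simp add: S2; (simp add: algebra_simps)?))?))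
  apply ((rule split2[where i=i and j=j and P="\<lambda>e. Mop t n i 0 (Mop t n j (Suc b1) v) e = Mop t n j (Suc b1) (Mop t n i 0 v) e"])?; simp add: S2; (simp add: algebra_simps)?)+
  done



lemma R8:
  assumes "j < i" "i < n" "b1 < n"
  shows "Mop t n j (Suc b1) (Mop t n i 0 v) e = t * Mop t n i 0 (Mop t n j (Suc b1) v) e + (1 - t) * Mop t n i (Suc b1) (Mop t n j 0 v) e"
  using assms
  apply (cases rule: linorder_cases[of b1 i]; cases rule: linorder_cases[of b1 j]; cases "i = 0"; cases "j = 0";
      ((linarith | (rule split2[where i=i and j=j and P="\<lambda>e. Mop t n j (Suc b1) (Mop t n i 0 v) e = t * Mop t n i 0 (Mop t n j (Suc b1) v) e + (1 - t) * Mop t n i (Suc b1) (Mop t n j 0 v) e"]; simp add: S2; (simp add: algebra_simps)?))?))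
  apply ((rule split2[where i=i and j=j and P="\<lambda>e. Mop t n j (Suc b1) (Mop t n i 0 v) e = t * Mop t n i 0 (Mop t n j (Suc b1) v) e + (1 - t) * Mop t n i (Suc b1) (Mop t n j 0 v) e"])?; simp add: S2; (simp add: algebra_simps)?)+
  done



lemma R9:
  assumes "i < j" "j < n" "a1 < n"
  shows "Mop t n i (Suc a1) (Mop t n j 0 v) e = t * Mop t n j 0 (Mop t n i (Suc a1) v) e + (1 - t) * Mop t n i 0 (Mop t n j (Suc a1) v) e"
  using assms
  apply (cases rule: linorder_cases[of a1 i]; cases rule: linorder_cases[of a1 j]; cases "i = 0"; cases "j = 0";
      ((linarith | (rule split2[where i=i and j=j and P="\<lambda>e. Mop t n i (Suc a1) (Mop t n j 0 v) e = t * Mop t n j 0 (Mop t n i (Suc a1) v) e + (1 - t) * Mop t n i 0 (Mop t n j (Suc a1) v) e"]; simp add: S2; (simp add: algebra_simps)?))?))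
  apply ((rule split2[where i=i and j=j and P="\<lambda>e. Mop t n i (Suc a1) (Mop t n j 0 v) e = t * Mop t n j 0 (Mop t n i (Suc a1) v) e + (1 - t) * Mop t n i 0 (Mop t n j (Suc a1) v) e"])?; simp add: S2; (simp add: algebra_simps)?)+
  done

lemma Tmat_M: "Tmat t n z i \<alpha> v = (\<lambda>e. (if \<alpha> = 0 then 1 else z) * Mop t n i \<alpha> v e)"
  by (auto simp: Tmat_def Mop_def)

lemma Mop_lin: "Mop t n i \<alpha> (\<lambda>e. c * w e) e = c * Mop t n i \<alpha> w e"
  by (simp add: Mop_pt)

lemma TT: "Tmat t n z2 p \<beta> (Tmat t n z1 q \<alpha> v) e =
   (if \<beta> = 0 then 1 else z2) * (if \<alpha> = 0 then 1 else z1) * Mop t n p \<beta> (Mop t n q \<alpha> v) e"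
  by (simp add: Tmat_M Mop_lin)

theorem proposition5p2:
  fixes t x y :: "'a::field" and n a b i j :: nat
  assumes "n \<ge> 1" and "a \<le> n" and "b \<le> n" and "i \<le> n - 1" and "j \<le> n - 1"
    and "x \<noteq> 0" and "1 - t * (y / x) \<noteq> 0"
  shows "\<forall>v :: 'a fvec.
     (\<lambda>e. \<Sum>a'=0..n-1. \<Sum>b'=0..n-1. Rmat t (y / x) a' b' i j * Tmat t n y b' b (Tmat t n x a' a v) e)
   = (\<lambda>e. \<Sum>i'=0..n. \<Sum>j'=0..n. Tmat t n x i i' (Tmat t n y j j' v) e * Rmat t (y / x) a b i' j')"
proof (intro allI ext)
  fix v :: "'a fvec" and e
  have inn: "i < n" "j < n" using assms by auto
  define z where "z = y / x"
  have yz: "y = x * z" using assms(6) by (simp add: z_def)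
  have D: "1 - t * z \<noteq> 0" "t * z \<noteq> 1" using assms(7) by (auto simp: z_def)
  have D2: "(1 - t * z) * (1 - t * z) \<noteq> 0" using D by simp
  let ?M = "\<lambda>p \<beta> q \<alpha>. Mop t n p \<beta> (Mop t n q \<alpha> v) e"
  have L: "(\<Sum>a'=0..n-1. \<Sum>b'=0..n-1. Rmat t (y / x) a' b' i j * Tmat t n y b' b (Tmat t n x a' a v) e)
     = (if i = j then Tmat t n y i b (Tmat t n x i a v) e
        else Rmat t (y/x) i j i j * Tmat t n y j b (Tmat t n x i a v) e + Rmat t (y/x) j i i j * Tmat t n y i b (Tmat t n x j a v) e)"
    using sumL[of i "n-1" j t "y/x" "\<lambda>a' b'. Tmat t n y b' b (Tmat t n x a' a v) e"] assms by simp
  have R: "(\<Sum>i'=0..n. \<Sum>j'=0..n. Tmat t n x i i' (Tmat t n y j j' v) e * Rmat t (y / x) a b i' j')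
     = (if a = b then Tmat t n x i a (Tmat t n y j a v) e
        else Tmat t n x i a (Tmat t n y j b v) e * Rmat t (y/x) a b a b + Tmat t n x i b (Tmat t n y j a v) e * Rmat t (y/x) a b b a)"
    using sumR[of a n b "\<lambda>i' j'. Tmat t n x i i' (Tmat t n y j j' v) e" t "y/x"] assms by simp
  have main: "(if i = j then Tmat t n y i b (Tmat t n x i a v) e
        else Rmat t (y/x) i j i j * Tmat t n y j b (Tmat t n x i a v) e + Rmat t (y/x) j i i j * Tmat t n y i b (Tmat t n x j a v) e)
     = (if a = b then Tmat t n x i a (Tmat t n y j a v) e
        else Tmat t n x i a (Tmat t n y j b v) e * Rmat t (y/x) a b a b + Tmat t n x i b (Tmat t n y j a v) e * Rmat t (y/x) a b b a)"

  proof (cases "i = j")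
    case ij: True
    show ?thesis
    proof (cases rule: linorder_cases[of a b])
      case ab: less
      then obtain b1 where b1: "b = Suc b1" by (cases b) auto
      show ?thesis
      proof (cases a)
        case 0
        have r: "?M i 0 i b = ?M i b i 0" using R1b[of b1 n i t v e] b1 assms inn by simp
        show ?thesis using ab 0 ij r b1 D D2 assms(6) by (simp add: TT Rmat_def z_def[symmetric] yz field_simps)
      next
        case (Suc a1)
        have r: "?M i b i a = t * ?M i a i b" using R1a'[of a1 b1 n i t v e] b1 Suc ab assms inn by simp
        show ?thesis using ab Suc ij r b1 D D2 assms(6) by (simp add: TT Rmat_def z_def[symmetric] yz field_simps)
      qed
    next
      case equal
      then show ?thesis using ij by (simp add: TT mult_ac)
    next
      case ab: greater
      then obtain a1 where a1: "a = Suc a1" by (cases a) auto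
      show ?thesis
      proof (cases b)
        case 0
        have r: "?M i 0 i a = ?M i a i 0" using R1b[of a1 n i t v e] a1 assms inn by simp
        show ?thesis using ab 0 ij r a1 D D2 assms(6) by (simp add: TT Rmat_def z_def[symmetric] yz field_simps)
      next
        case (Suc b1)
        have r: "?M i a i b = t * ?M i b i a" using R1a'[of b1 a1 n i t v e] a1 Suc ab assms inn by simp
        show ?thesis using ab Suc ij r a1 D D2 assms(6) by (simp add: TT Rmat_def z_def[symmetric] yz field_simps)
      qed
    qed
  next
    case ij: False
    show ?thesis
    proof (cases rule: linorder_cases[of a b])
      case equal
      have r: "?M j a i a = ?M i a j a"
      proof (cases a)
        case 0 then show ?thesis using R2z[of i j n t v e] ij inn by simp
      next
        case (Suc a1) then show ?thesis using R2[of i j n a1 t v e] ij inn assms by simp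
      qed
      show ?thesis using equal ij r D D2 assms(6) by (simp add: TT Rmat_def z_def[symmetric] yz field_simps)
    next
      case ab: less
      then obtain b1 where b1: "b = Suc b1" by (cases b) auto
      show ?thesis
      proof (cases rule: linorder_cases[of i j])
        case ijl: less
        show ?thesis
        proof (cases a)
          case 0
          have r: "?M i 0 j b = ?M j b i 0" using R7[of i j n b1 t v e] b1 assms inn ijl by simp
          show ?thesis using ab 0 ij ijl r b1 D D2 assms(6) by (simp add: TT Rmat_def z_def[symmetric] yz field_simps)
        next
          case (Suc a1)
          have r: "t * ?M j b i a + (1 - t) * ?M i b j a = t * ?M i a j b"
            using R3[of i j n a1 b1 t v e] b1 Suc ab assms inn ijl by simp
          have key: "(1 - z) * t * ?M j b i a + (1 - t) * ?M i b j a = (1 - z) * t * ?M i a j b + (1 - t) * z * ?M i b j a"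
          proof -
            have "(1 - z) * t * ?M i a j b + (1 - t) * z * ?M i b j a = (1 - z) * (t * ?M i a j b) + (1 - t) * z * ?M i b j a"
              by (simp add: algebra_simps)
            also have "\<dots> = (1 - z) * (t * ?M j b i a + (1 - t) * ?M i b j a) + (1 - t) * z * ?M i b j a"
              using r by simp
            also have "\<dots> = (1 - z) * t * ?M j b i a + (1 - t) * ?M i b j a" by (simp add: algebra_simps)
            finally show ?thesis by simp
          qed
          have l1: "Rmat t (y/x) i j i j * Tmat t n y j b (Tmat t n x i a v) e + Rmat t (y/x) j i i j * Tmat t n y i b (Tmat t n x j a v) e
             = x * y * ((1 - z) * t * ?M j b i a + (1 - t) * ?M i b j a) / (1 - t * z)"
            using ab Suc ij ijl b1 D D2 by (simp add: TT Rmat_def z_def[symmetric] field_simps)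
          have l2: "Tmat t n x i a (Tmat t n y j b v) e * Rmat t (y/x) a b a b + Tmat t n x i b (Tmat t n y j a v) e * Rmat t (y/x) a b b a
             = x * y * ((1 - z) * t * ?M i a j b + (1 - t) * z * ?M i b j a) / (1 - t * z)"
            using ab Suc ij ijl b1 D D2 yz by (simp add: TT Rmat_def z_def[symmetric] field_simps)
          show ?thesis using ab ij l1 l2 key by simp
        qed
      next
        case equal then show ?thesis using ij by simp
      next
        case ijl: greater
        show ?thesis
        proof (cases a)
          case 0
          have r: "?M j b i 0 = t * ?M i 0 j b + (1 - t) * ?M i b j 0" using R8[of j i n b1 t v e] b1 assms inn ijl by simp
          show ?thesis using ab 0 ij ijl b1 D D2 assms(6) by (simp add: r[unfolded b1] TT Rmat_def z_def[symmetric] yz field_simps)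
        next
          case (Suc a1)
          have r: "?M j b i a = t * ?M i a j b"
            using R5[of j i n a1 b1 t v e] b1 Suc ab assms inn ijl by simp
          show ?thesis using ab Suc ij ijl r b1 D D2 assms(6) by (simp add: TT Rmat_def z_def[symmetric] yz field_simps)
        qed
      qed
    next
      case ab: greater
      then obtain a1 where a1: "a = Suc a1" by (cases a) auto
      show ?thesis
      proof (cases rule: linorder_cases[of i j])
        case ijl: less
        show ?thesis
        proof (cases b)
          case 0
          have r: "?M i a j 0 = t * ?M j 0 i a + (1 - t) * ?M i 0 j a" using R9[of i j n a1 t v e] a1 assms inn ijl by simp
          show ?thesis using ab 0 ij ijl a1 D D2 assms(6) by (simp add: r[unfolded a1] TT Rmat_def z_def[symmetric] yz field_simps)
        next
          case (Suc b1)
          have r: "?M i a j b = t * ?M j b i a"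
            using R5[of i j n b1 a1 t v e] a1 Suc ab assms inn ijl by simp
          show ?thesis using ab Suc ij ijl r a1 D D2 assms(6) by (simp add: TT Rmat_def z_def[symmetric] yz field_simps)
        qed
      next
        case equal then show ?thesis using ij by simp
      next
        case ijl: greater
        show ?thesis
        proof (cases b)
          case 0
          have r: "?M j 0 i a = ?M i a j 0" using R7[of j i n a1 t v e] a1 assms inn ijl by simp
          show ?thesis using ab 0 ij ijl r a1 D D2 assms(6) by (simp add: TT Rmat_def z_def[symmetric] yz field_simps)
        next
          case (Suc b1)
          have r: "?M j b i a - ?M i a j b = (1 - t) * ?M i b j a"
            using R6[of j i n b1 a1 t v e] a1 Suc ab assms inn ijl by simp
          have r': "?M j b i a = ?M i a j b + (1 - t) * ?M i b j a" using r by (simp add: algebra_simps)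
          show ?thesis using ab Suc ij ijl a1 D D2 assms(6) by (simp add: r'[unfolded a1 Suc] TT Rmat_def z_def[symmetric] yz field_simps)
        qed
      qed
    qed
  qed
  show "(\<Sum>a'=0..n-1. \<Sum>b'=0..n-1. Rmat t (y / x) a' b' i j * Tmat t n y b' b (Tmat t n x a' a v) e)
     = (\<Sum>i'=0..n. \<Sum>j'=0..n. Tmat t n x i i' (Tmat t n y j j' v) e * Rmat t (y / x) a b i' j')"
    unfolding L R by (rule main)
qed


end
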